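(* Let $s\in(0,2]$, $P$ a finite set of $n$ points in $(\mathbb{R}^d,\ell_s)$, $\varepsilon>0$, and let $q\in\mathbb{R}^d$ be a query point processed by the reverse nearest neighbor query procedure described in the context, with $y$ the point found at step 1. Let $P'=\bigcup_i P_i$ for $i$ ranging from $\lfloor\log_{1+\varepsilon}\frac{\mathrm{d}(q,y)}{1+\varepsilon}\rfloor+1$ to $\lceil\log_{1+\varepsilon}\frac{\mathrm{d}(q,y)}{\varepsilon}\rceil$, and let $S'$ be the set of points inserted into $S$ at step 2. Then $\mathrm{RNN}_P(q)\cap P'\subseteq S'$ with high probability.
   Context: $\mathrm{d}$ is the $\ell_s$ distance; $\mathrm{d}(x,P)=\min\{\mathrm{d}(x,p):p\in P\setminus\{x\}\}$; $N_Q(x,R)$ is the set of $p\in Q\setminus\{x\}$ with $\mathrm{d}(x,p)\le R$; $\varepsilon\text{-}\mathrm{NN}_P(x)=N_P(x,(1+\varepsilon)\mathrm{d}(x,P))$; $\mathrm{RNN}_P(x)$ is the set of $p\in P\setminus\{x\}$ with $\mathrm{d}(p,x)\le\mathrm{d}(p,P)$; $\varepsilon\text{-}\mathrm{RNN}_P(x)$ is the set of $p\in P\setminus\{x\}$ with $\mathrm{d}(p,x)\le(1+\varepsilon)\mathrm{d}(p,P)$. Preprocessing: compute $\mathrm{d}(p,P)$ for all $p\in P$; bucket $P_i=\{p\in P:(1+\varepsilon)^{i-1}\le\mathrm{d}(p,P)<(1+\varepsilon)^i\}$, $i\in\mathbb{Z}$; on each nonempty $P_i$ build a locality-sensitive hashing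 structure for exhaustive $(1+\varepsilon)^i$-PLEB on $P_i$ (the lifted structure $\mathcal{A}'(P_i,(1+\varepsilon)^i,\varepsilon)$ built from $s$-stable hash functions) with $\lceil c\ln n\rceil$ independent repetitions, $c=3/\ln\frac52$, so that for each query it returns $N_{P_i}(q,(1+\varepsilon)^i)$ with probability at least $1-1/n^2$; for each $y\in P$ store the array $P_y=\varepsilon\text{-}\mathrm{RNN}_P(y)\cup\{y\}$ sorted by $\mathrm{d}(\cdot,P)$; build an $\varepsilon$-approximate nearest neighbor structure on $P$ (Har-Peled's tree of LSH structures). Query: (1) find $y\in P$ with the $\varepsilon$-NN structure (with probability at least $1-1/n$, $y\in\varepsilon\text{-}\mathrm{NN}_P(q)$); (2) for each $i$ from $\lfloor\log_{1+\varepsilon}\frac{\mathrm{d}(q,y)}{1+\varepsilon}\rfloor+1$ to $\lceil\log_{1+\varepsilon}\frac{\mathrm{d}(q,y)}{\varepsilon}\rceil$ with $P_i\neq\emptyset$, run the exhaustive $(1+\varepsilon)^i$-PLEB query on $P_i$ and put the outputs into $S$; (3) add to $S$ the points $p\in P_y$ with $\mathrm{d}(p,P)\ge\mathrm{d}(q,y)/\varepsilon$; (4) remove from $S$ the points $p$ with $\mathrm{d}(p,q)>\mathrm{d}(p,P)$; return $S$. "High probability" means probability at least $1-1/n$. *)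

theory Defs
  imports "HOL-Probability.Probability"
begin

definition ls_dist :: "real \<Rightarrow> real^'d \<Rightarrow> real^'d \<Rightarrow> real" where
  "ls_dist s x y = (\<Sum>i\<in>UNIV. \<bar>x$i - y$i\<bar> powr s) powr (1/s)"

definition dist_set :: "real \<Rightarrow> real^'d \<Rightarrow> (real^'d) set \<Rightarrow> real" where
  "dist_set s x P = Min ((\<lambda>p. ls_dist s x p) ` (P - {x}))"

definition nbhd :: "real \<Rightarrow> (real^'d) set \<Rightarrow> real^'d \<Rightarrow> real \<Rightarrow> (real^'d) set" where
  "nbhd s Q x R = {p \<in> Q - {x}. ls_dist s x p \<le> R}"

definition RNN :: "real \<Rightarrow> (real^'d) set \<Rightarrow> real^'d \<Rightarrow> (real^'d) set" where
  "RNN s P x = {p \<in> P - {x}. ls_dist s p x \<le> dist_set s p P}"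

definition bucket :: "real \<Rightarrow> (real^'d) set \<Rightarrow> real \<Rightarrow> int \<Rightarrow> (real^'d) set" where
  "bucket s P \<epsilon> i = {p \<in> P. (1+\<epsilon>) powr (real_of_int i - 1) \<le> dist_set s p P
                          \<and> dist_set s p P < (1+\<epsilon>) powr (real_of_int i)}"

text \<open>Index range of step 2, determined by r = d(q,y).\<close>
definition idx_range :: "real \<Rightarrow> real \<Rightarrow> int set" where
  "idx_range \<epsilon> r = {\<lfloor>log (1+\<epsilon>) (r/(1+\<epsilon>))\<rfloor> + 1 .. \<lceil>log (1+\<epsilon>) (r/\<epsilon>)\<rceil>}"

end

theory Submission
  imports Defs
begin


lemma bucket_disj:
  assumes eps: "0 < (\<epsilon>::real)" and "p \<in> bucket s P \<epsilon> i" "p \<in> bucket s P \<epsilon> j"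
  shows "i = j"
proof -
  have b: "1 < 1 + \<epsilon>" using eps by simp
  from assms(2,3) have "(1+\<epsilon>) powr (real_of_int i - 1) < (1+\<epsilon>) powr real_of_int j"
    "(1+\<epsilon>) powr (real_of_int j - 1) < (1+\<epsilon>) powr real_of_int i"
    unfolding bucket_def by auto
  hence "real_of_int i - 1 < real_of_int j" "real_of_int j - 1 < real_of_int i"
    using b by (simp_all add: powr_less_cancel_iff)
  thus ?thesis by linarith
qed

lemma ls_dist_sym: "ls_dist s x y = ls_dist s y x"
  unfolding ls_dist_def by (simp add: abs_minus_commute)

theorem lemma6:
  fixes s \<epsilon> :: real and P :: "(real^'d) set" and q :: "real^'d"
    and M :: "'w measure"
    and y :: "'w \<Rightarrow> real^'d"
    and Out :: "int \<Rightarrow> 'w \<Rightarrow> (real^'d) set"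
  assumes s: "0 < s" "s \<le> 2"
    and eps: "0 < \<epsilon>"
    and P: "finite P" "card P \<ge> 2"
    and M: "prob_space M"
    and y: "\<And>\<omega>. \<omega> \<in> space M \<Longrightarrow> y \<omega> \<in> P \<and> y \<omega> \<noteq> q"
    and pleb: "\<And>i. bucket s P \<epsilon> i \<noteq> {} \<Longrightarrow>
        {\<omega> \<in> space M. Out i \<omega> = nbhd s (bucket s P \<epsilon> i) q ((1+\<epsilon>) powr real_of_int i)} \<in> sets M
      \<and> measure M {\<omega> \<in> space M. Out i \<omega> = nbhd s (bucket s P \<epsilon> i) q ((1+\<epsilon>) powr real_of_int i)}
          \<ge> 1 - 1 / (real (card P))^2"
  shows "\<exists>E \<in> sets M. measure M E \<ge> 1 - 1 / real (card P) \<and>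
          (\<forall>\<omega> \<in> E.
             RNN s P q \<inter> (\<Union>i \<in> idx_range \<epsilon> (ls_dist s q (y \<omega>)). bucket s P \<epsilon> i)
             \<subseteq> (\<Union>i \<in> {i \<in> idx_range \<epsilon> (ls_dist s q (y \<omega>)). bucket s P \<epsilon> i \<noteq> {}}. Out i \<omega>))"
proof -
  interpret prob_space M by (rule M)
  define I where "I = {i. bucket s P \<epsilon> i \<noteq> {}}"
  define A where "A i = {\<omega> \<in> space M. Out i \<omega> = nbhd s (bucket s P \<epsilon> i) q ((1+\<epsilon>) powr real_of_int i)}" for i
  define n where "n = real (card P)"
  have n2: "n \<ge> 2" using P(2) unfolding n_def by simp
  define f where "f i = (SOME p. p \<in> bucket s P \<epsilon> i)" for i
  have fI: "f i \<in> bucket s P \<epsilon> i" if "i \<in> I" for i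
    using that unfolding I_def f_def by (auto intro: someI)
  have inj: "inj_on f I"
    by (rule inj_onI) (metis fI bucket_disj eps)
  have fP: "f ` I \<subseteq> P" using fI unfolding bucket_def by auto
  have finI: "finite I" using inj fP P(1) by (meson finite_imageD finite_subset)
  have cardI: "card I \<le> card P" using card_inj_on_le[OF inj fP P(1)] .
  have Asets: "A i \<in> events" "prob (A i) \<ge> 1 - 1 / n^2" if "i \<in> I" for i
    using pleb[of i] that unfolding I_def A_def n_def by auto
  define E where "E = space M - (\<Union>i\<in>I. space M - A i)"
  have Eev: "E \<in> events" unfolding E_def
    by (intro sets.Diff sets.top sets.finite_UN finI) (auto intro: Asets)
  have "prob (\<Union>i\<in>I. space M - A i) \<le> (\<Sum>i\<in>I. prob (space M - A i))"
    using finI Asets by (intro finite_measure_subadditive_finite) auto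
  also have "\<dots> \<le> (\<Sum>i\<in>I. 1 / n^2)"
    proof (intro sum_mono)
    fix i assume "i \<in> I"
    with Asets[OF this] show "prob (space M - A i) \<le> 1 / n^2" by (simp add: prob_compl)
  qed
  also have "\<dots> = card I / n^2" by simp
  also have "\<dots> \<le> n / n^2" using cardI n2 unfolding n_def
    by (intro divide_right_mono) auto
  also have "\<dots> = 1 / n" using n2 by (simp add: power2_eq_square)
  finally have pu: "prob (\<Union>i\<in>I. space M - A i) \<le> 1 / n" .
  have "prob E = 1 - prob (\<Union>i\<in>I. space M - A i)"
    unfolding E_def using finI Asets
    by (intro prob_compl sets.finite_UN sets.Diff sets.top) auto
  hence PE: "prob E \<ge> 1 - 1 / n" using pu by simp
  show ?thesis
  proof (intro bexI[OF _ Eev] conjI ballI)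
    show "1 - 1 / real (card P) \<le> prob E" using PE unfolding n_def .
  next
    fix \<omega> assume w: "\<omega> \<in> E"
    show "RNN s P q \<inter> (\<Union>i \<in> idx_range \<epsilon> (ls_dist s q (y \<omega>)). bucket s P \<epsilon> i)
             \<subseteq> (\<Union>i \<in> {i \<in> idx_range \<epsilon> (ls_dist s q (y \<omega>)). bucket s P \<epsilon> i \<noteq> {}}. Out i \<omega>)"
    proof
      fix p assume p: "p \<in> RNN s P q \<inter> (\<Union>i \<in> idx_range \<epsilon> (ls_dist s q (y \<omega>)). bucket s P \<epsilon> i)"
      then obtain i where i: "i \<in> idx_range \<epsilon> (ls_dist s q (y \<omega>))" "p \<in> bucket s P \<epsilon> i" by auto
      have iI: "i \<in> I" using i unfolding I_def by auto
      have "\<omega> \<in> A i" using w iI unfolding E_def by auto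
      hence O: "Out i \<omega> = nbhd s (bucket s P \<epsilon> i) q ((1+\<epsilon>) powr real_of_int i)" unfolding A_def by auto
      have "ls_dist s p q \<le> dist_set s p P" "p \<noteq> q" using p unfolding RNN_def by auto
      moreover have "dist_set s p P < (1+\<epsilon>) powr real_of_int i" using i(2) unfolding bucket_def by auto
      ultimately have "p \<in> Out i \<omega>" unfolding O nbhd_def using i(2) by (auto simp: ls_dist_sym)
      thus "p \<in> (\<Union>i \<in> {i \<in> idx_range \<epsilon> (ls_dist s q (y \<omega>)). bucket s P \<epsilon> i \<noteq> {}}. Out i \<omega>)"
        using i by auto
    qed
  qed
qed

end
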